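(* Let $X$ be a Tychonoff space. Then $C_p(X,\mathbb R)$ is STAP if and only if $X$ is finite.
   Context: $C_p(X,\mathbb R)$ is the additive group of all continuous functions $X\to\mathbb R$ with the topology of pointwise convergence; its neutral element is the zero function. A sequence $(f_n)$ in an abelian topological group is hyper-converging if $m_nf_n\to 0$ for every integer sequence $(m_n)$. A group is STAP if no sequence of pairwise distinct elements is hyper-converging. *)

theory Defs
  imports "HOL-Analysis.Analysis"
begin

definition Tychonoff_space :: "'a topology \<Rightarrow> bool" where
  "Tychonoff_space X \<longleftrightarrow> completely_regular_space X \<and> Hausdorff_space X"

text \<open>Carrier of C_p(X,R): continuous real functions on topspace X,
  represented extensionally (value undefined outside topspace X), as points of
  the product space R^(topspace X).\<close>
definition Cp :: "'a topology \<Rightarrow> ('a \<Rightarrow> real) set" where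
  "Cp X = {f. continuous_map X euclideanreal f \<and> f \<in> extensional (topspace X)}"

definition Cp_top :: "'a topology \<Rightarrow> ('a \<Rightarrow> real) topology" where
  "Cp_top X = subtopology (product_topology (\<lambda>_. euclideanreal) (topspace X)) (Cp X)"

definition Cp_zero :: "'a topology \<Rightarrow> 'a \<Rightarrow> real" where
  "Cp_zero X = restrict (\<lambda>_. 0) (topspace X)"

definition Cp_intmult :: "'a topology \<Rightarrow> int \<Rightarrow> ('a \<Rightarrow> real) \<Rightarrow> 'a \<Rightarrow> real" where
  "Cp_intmult X k f = restrict (\<lambda>x. of_int k * f x) (topspace X)"

definition Cp_hyper_converging :: "'a topology \<Rightarrow> (nat \<Rightarrow> 'a \<Rightarrow> real) \<Rightarrow> bool" where
  "Cp_hyper_converging X f \<longleftrightarrow> (\<forall>n. f n \<in> Cp X) \<and>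
     (\<forall>m :: nat \<Rightarrow> int. limitin (Cp_top X) (\<lambda>n. Cp_intmult X (m n) (f n)) (Cp_zero X) sequentially)"

definition Cp_STAP :: "'a topology \<Rightarrow> bool" where
  "Cp_STAP X \<longleftrightarrow> \<not> (\<exists>f. inj f \<and> Cp_hyper_converging X f)"

end

theory Submission
  imports Defs
begin

lemma split_step:
  assumes H: "Hausdorff_space X" and W: "openin X W" and inf: "infinite W"
  shows "\<exists>U W'. openin X U \<and> U \<noteq> {} \<and> openin X W' \<and> infinite W' \<and> U \<inter> W' = {} \<and> U \<subseteq> W \<and> W' \<subseteq> W"
proof -
  have t1: "t1_space X" using H Hausdorff_imp_t1_space by blast
  obtain a where a: "a \<in> W" using inf by (metis finite.emptyI ex_in_conv)
  obtain b where b: "b \<in> W" "b \<noteq> a"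
  proof -
    have "W - {a} \<noteq> {}" using inf by (metis Diff_eq_empty_iff finite.emptyI finite_insert finite_subset)
    then show ?thesis using that by blast
  qed
  have Wsub: "W \<subseteq> topspace X" using W openin_subset by blast
  obtain A B where AB: "openin X A" "openin X B" "a \<in> A" "b \<in> B" "disjnt A B"
    proof -
    have "a \<in> topspace X" "b \<in> topspace X" using a b Wsub by auto
    then show ?thesis using H b(2) that unfolding Hausdorff_space_def by blast
  qed
  show ?thesis
  proof (cases "finite (W \<inter> A)")
    case False
    show ?thesis
      apply (rule exI[of _ "W \<inter> B"], rule exI[of _ "W \<inter> A"])
      using False AB W a b by (auto simp: disjnt_def)
  next
    case True
    have cl: "closedin X (W \<inter> A - {a})"
      using t1_space_closedin_finite[THEN iffD1, OF t1] True Wsub by auto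
    have eq: "{a} = (W \<inter> A) - (W \<inter> A - {a})" using a AB by auto
    have "openin X ((W \<inter> A) - (W \<inter> A - {a}))" using cl W AB by (intro openin_diff openin_Int) auto
    then have oa: "openin X {a}" by (simp only: eq[symmetric])
    have ow: "openin X (W - {a})" using t1_space_openin_delete[THEN iffD1, OF t1] W a by blast
    show ?thesis
      apply (rule exI[of _ "{a}"], rule exI[of _ "W - {a}"])
      using oa ow inf a by auto
  qed
qed

lemma cellular:
  assumes H: "Hausdorff_space X" and inf: "infinite (topspace X)"
  shows "\<exists>U::nat \<Rightarrow> 'a set. (\<forall>n. openin X (U n) \<and> U n \<noteq> {}) \<and> (\<forall>m n. m \<noteq> n \<longrightarrow> U m \<inter> U n = {})"
proof -
  define step where "step W = (SOME p. openin X (fst p) \<and> fst p \<noteq> {} \<and> openin X (snd p) \<and> infinite (snd p)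
      \<and> fst p \<inter> snd p = {} \<and> fst p \<subseteq> W \<and> snd p \<subseteq> W)" for W
  have stepP: "openin X (fst (step W)) \<and> fst (step W) \<noteq> {} \<and> openin X (snd (step W)) \<and> infinite (snd (step W))
      \<and> fst (step W) \<inter> snd (step W) = {} \<and> fst (step W) \<subseteq> W \<and> snd (step W) \<subseteq> W"
    if WW: "openin X W" "infinite W" for W
  proof -
    obtain U W' where "openin X U \<and> U \<noteq> {} \<and> openin X W' \<and> infinite W' \<and> U \<inter> W' = {} \<and> U \<subseteq> W \<and> W' \<subseteq> W"
      using split_step[OF H WW] by blast
    then have "\<exists>p. openin X (fst p) \<and> fst p \<noteq> {} \<and> openin X (snd p) \<and> infinite (snd p)
      \<and> fst p \<inter> snd p = {} \<and> fst p \<subseteq> W \<and> snd p \<subseteq> W" by (intro exI[of _ "(U,W')"]) auto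
    then show ?thesis unfolding step_def by (rule someI_ex)
  qed
  define Ws where "Ws = rec_nat (topspace X) (\<lambda>_ W. snd (step W))"
  have Ws0: "Ws 0 = topspace X" and WsS: "Ws (Suc n) = snd (step (Ws n))" for n
    by (simp_all add: Ws_def)
  have inv: "openin X (Ws n) \<and> infinite (Ws n)" for n
  proof (induction n)
    case 0 then show ?case using inf by (simp add: Ws0)
  next
    case (Suc n) then show ?case using stepP[of "Ws n"] by (simp add: WsS)
  qed
  define U where "U n = fst (step (Ws n))" for n
  have P: "openin X (U n) \<and> U n \<noteq> {} \<and> U n \<inter> Ws (Suc n) = {} \<and> U n \<subseteq> Ws n \<and> Ws (Suc n) \<subseteq> Ws n" for n
    using stepP[of "Ws n"] inv[of n] by (simp add: U_def WsS)
  have mono: "Ws m \<subseteq> Ws n" if "n \<le> m" for m n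
    using that
  proof (induction m)
    case 0 then show ?case by simp
  next
    case (Suc m) then show ?case using P[of m] by (cases "n = Suc m") auto
  qed
  have disj: "U m \<inter> U n = {}" if "n < m" for m n
  proof -
    have "U m \<subseteq> Ws (Suc n)" using P[of m] mono[of "Suc n" m] that by auto
    then show ?thesis using P[of n] by auto
  qed
  show ?thesis
    apply (rule exI[of _ U])
    using P disj by (metis Int_commute linorder_neqE_nat)
qed

lemma Cp_intmult_in: "f \<in> Cp X \<Longrightarrow> Cp_intmult X k f \<in> Cp X"
  unfolding Cp_def Cp_intmult_def
  by (auto intro!: continuous_map_real_mult_left continuous_map_eq[of X euclideanreal "\<lambda>x. of_int k * f x"])

lemma Cp_zero_in: "Cp_zero X \<in> Cp X"
  unfolding Cp_def Cp_zero_def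
  by (auto intro!: continuous_map_eq[of X euclideanreal "\<lambda>x. 0"])

lemma hyper_pointwise:
  assumes "Cp_hyper_converging X f" "x \<in> topspace X"
  shows "((\<lambda>n. of_int (m n) * f n x) \<longlongrightarrow> 0) sequentially"
proof -
  have "limitin (Cp_top X) (\<lambda>n. Cp_intmult X (m n) (f n)) (Cp_zero X) sequentially"
    using assms(1) unfolding Cp_hyper_converging_def by blast
  then have "limitin euclideanreal (\<lambda>n. Cp_intmult X (m n) (f n) x) (Cp_zero X x) sequentially"
    unfolding Cp_top_def limitin_subtopology limitin_componentwise using assms(2) by blast
  then show ?thesis using assms(2) by (simp add: Cp_intmult_def Cp_zero_def)
qed

lemma inf_not_STAP:
  assumes T: "Tychonoff_space X" and inf: "infinite (topspace X)"
  shows "\<not> Cp_STAP X"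
proof -
  have CR: "completely_regular_space X" and H: "Hausdorff_space X"
    using T by (auto simp: Tychonoff_space_def)
  obtain U :: "nat \<Rightarrow> 'a set" where U: "\<And>n. openin X (U n)" "\<And>n. U n \<noteq> {}"
      and D: "\<And>m n. m \<noteq> n \<Longrightarrow> U m \<inter> U n = {}"
    using cellular[OF H inf] by blast
  define x where "x n = (SOME y. y \<in> U n)" for n
  have xU: "x n \<in> U n" for n unfolding x_def using U(2)[of n] by (simp add: some_in_eq)
  have Usub: "U n \<subseteq> topspace X" for n using U(1) openin_subset by blast
  have ex: "\<exists>g::'a\<Rightarrow>real. continuous_map X (top_of_set {0..1}) g \<and> g (x n) = 0 \<and> g ` (topspace X - U n) \<subseteq> {1}" for n
  proof -
    have c: "closedin X (topspace X - U n)" using U(1) by blast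
    have xi: "x n \<in> topspace X - (topspace X - U n)" using xU Usub by auto
    show ?thesis using CR[unfolded completely_regular_space_def, rule_format, OF conjI[OF c xi]] .
  qed
  have "\<exists>g::nat\<Rightarrow>'a\<Rightarrow>real. \<forall>n. continuous_map X (top_of_set {0..1}) (g n) \<and> g n (x n) = 0 \<and> g n ` (topspace X - U n) \<subseteq> {1}"
    using ex by (rule choice[OF allI])
  then obtain g :: "nat \<Rightarrow> 'a \<Rightarrow> real" where gall: "\<forall>n. continuous_map X (top_of_set {0..1}) (g n) \<and> g n (x n) = 0 \<and> g n ` (topspace X - U n) \<subseteq> {1}"
    by (elim exE)
  have g: "\<And>n. continuous_map X (top_of_set {0..1}) (g n)"
      "\<And>n. g n (x n) = 0" "\<And>n. g n ` (topspace X - U n) \<subseteq> {1}"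
    using gall by simp_all
  define f where "f n = restrict (\<lambda>y. 1 - g n y) (topspace X)" for n
  have gc: "continuous_map X euclideanreal (g n)" for n
    using g(1)[of n] by (simp add: continuous_map_in_subtopology)
  have fCp: "f n \<in> Cp X" for n
  proof -
    have "continuous_map X euclideanreal (\<lambda>y. 1 - g n y)"
      by (intro continuous_map_diff gc continuous_map_const[THEN iffD2]) simp
    then have "continuous_map X euclideanreal (f n)"
      by (rule continuous_map_eq) (simp add: f_def)
    then show ?thesis unfolding Cp_def f_def by simp
  qed
  have fx: "f n (x n) = 1" for n using xU Usub g(2) by (auto simp: f_def)
  have fzero: "f m y = 0" if "y \<in> topspace X" "y \<notin> U m" for m y
    using g(3)[of m] that by (auto simp: f_def)
  have inj: "inj f"
  proof (rule injI)
    fix m n assume eq: "f m = f n"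
    show "m = n"
    proof (rule ccontr)
      assume "m \<noteq> n"
      then have "x n \<notin> U m" using D[of m n] xU[of n] by auto
      then have "f m (x n) = 0" using fzero xU Usub by blast
      then show False using eq fx[of n] by simp
    qed
  qed
  have hyper: "Cp_hyper_converging X f"
    unfolding Cp_hyper_converging_def
  proof (intro conjI allI)
    fix n show "f n \<in> Cp X" by (rule fCp)
  next
    fix m :: "nat \<Rightarrow> int"
    have pt: "((\<lambda>c. Cp_intmult X (m c) (f c) y) \<longlongrightarrow> Cp_zero X y) sequentially" if y: "y \<in> topspace X" for y
    proof (rule tendsto_eventually)
      show "\<forall>\<^sub>F c in sequentially. Cp_intmult X (m c) (f c) y = Cp_zero X y"
      proof (cases "\<exists>k. y \<in> U k")
        case True
        then obtain k where k: "y \<in> U k" by blast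
        show ?thesis unfolding eventually_sequentially
        proof (intro exI[of _ "Suc k"] allI impI)
          fix c assume "Suc k \<le> c"
          then have "y \<notin> U c" using D[of c k] k by auto
          then show "Cp_intmult X (m c) (f c) y = Cp_zero X y"
            using fzero y by (simp add: Cp_intmult_def Cp_zero_def)
        qed
      next
        case False
        then show ?thesis using fzero y by (simp add: Cp_intmult_def Cp_zero_def)
      qed
    qed
    show "limitin (Cp_top X) (\<lambda>n. Cp_intmult X (m n) (f n)) (Cp_zero X) sequentially"
      unfolding Cp_top_def limitin_subtopology limitin_componentwise
    proof (intro conjI)
      show "Cp_zero X \<in> Cp X" by (rule Cp_zero_in)
      show "\<forall>\<^sub>F n in sequentially. Cp_intmult X (m n) (f n) \<in> Cp X"
        by (rule always_eventually) (intro allI Cp_intmult_in fCp)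
      show "Cp_zero X \<in> extensional (topspace X)" by (simp add: Cp_zero_def)
      show "\<forall>\<^sub>F n in sequentially. Cp_intmult X (m n) (f n) \<in> topspace (product_topology (\<lambda>_. euclideanreal) (topspace X))"
        by (simp add: Cp_intmult_def topspace_product_topology)
      show "\<forall>i\<in>topspace X. limitin euclideanreal (\<lambda>c. Cp_intmult X (m c) (f c) i) (Cp_zero X i) sequentially"
        using pt by simp
    qed
  qed
  show ?thesis unfolding Cp_STAP_def using inj hyper by blast
qed

lemma fin_STAP:
  assumes fin: "finite (topspace X)"
  shows "Cp_STAP X"
proof -
  let ?T = "topspace X"
  have False if inj: "inj f" and hy: "Cp_hyper_converging X f" for f
  proof -
    have fCp: "f n \<in> Cp X" for n using hy by (simp add: Cp_hyper_converging_def)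
    define M where "M n = (\<Sum>x\<in>?T. \<bar>f n x\<bar>)" for n
    have Mge: "M n \<ge> 0" for n unfolding M_def by (simp add: sum_nonneg)
    have zero_uniq: "n = k" if "M n = 0" "M k = 0" for n k
    proof -
      have z: "f j x = 0" if "M j = 0" "x \<in> ?T" for j x
        using that fin by (simp add: M_def sum_nonneg_eq_0_iff)
      have "f n = f k"
      proof
        fix x show "f n x = f k x"
        proof (cases "x \<in> ?T")
          case True then show ?thesis using z \<open>M n = 0\<close> \<open>M k = 0\<close> by simp
        next
          case False then show ?thesis using fCp[of n] fCp[of k] by (simp add: Cp_def extensional_def)
        qed
      qed
      then show ?thesis using inj by (simp add: inj_eq)
    qed
    obtain N where N: "\<And>n. n \<ge> N \<Longrightarrow> M n \<noteq> 0"
    proof (cases "\<exists>n0. M n0 = 0")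
      case True
      then obtain n0 where "M n0 = 0" by blast
      then show ?thesis using zero_uniq that[of "Suc n0"] by fastforce
    next
      case False then show ?thesis using that[of 0] by blast
    qed
    define m where "m n = ceiling (1 / M n)" for n
    have lim: "((\<lambda>n. \<Sum>x\<in>?T. \<bar>of_int (m n) * f n x\<bar>) \<longlongrightarrow> 0) sequentially"
    proof -
      have "((\<lambda>n. \<Sum>x\<in>?T. \<bar>of_int (m n) * f n x\<bar>) \<longlongrightarrow> (\<Sum>x\<in>?T. 0)) sequentially"
        by (intro tendsto_sum tendsto_rabs_zero hyper_pointwise[OF hy])
      then show ?thesis by simp
    qed
    have ge1: "(\<Sum>x\<in>?T. \<bar>of_int (m n) * f n x\<bar>) \<ge> 1" if "n \<ge> N" for n
    proof -
      have Mp: "M n > 0" using N[OF that] Mge[of n] by linarith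
      have "(\<Sum>x\<in>?T. \<bar>of_int (m n) * f n x\<bar>) = \<bar>of_int (m n)\<bar> * M n"
        by (simp add: M_def abs_mult sum_distrib_left)
      moreover have "of_int (m n) \<ge> 1 / M n" unfolding m_def by (rule le_of_int_ceiling)
      moreover have "(1 / M n) * M n = 1" using Mp by simp
      ultimately show ?thesis using Mp
        by (smt (verit, ccfv_SIG) mult_right_mono divide_pos_pos)
    qed
    have "\<forall>\<^sub>F n in sequentially. (\<Sum>x\<in>?T. \<bar>of_int (m n) * f n x\<bar>) < 1"
      using lim by (rule order_tendstoD) simp
    moreover have "\<forall>\<^sub>F n in sequentially. n \<ge> N" by (simp add: eventually_ge_at_top)
    ultimately have "\<forall>\<^sub>F n in sequentially. False"
      by eventually_elim (use ge1 in force)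
    then show False by simp
  qed
  then show ?thesis unfolding Cp_STAP_def by blast
qed

theorem theorem6p4:
  fixes X :: "'a topology"
  assumes "Tychonoff_space X"
  shows "Cp_STAP X \<longleftrightarrow> finite (topspace X)"
  using fin_STAP inf_not_STAP[OF assms] by blast

end
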